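(* For every probability distribution $P^0\in\Delta^{n-1}_+$ there exists a neighbourhood $U$ of $P^0$ in $\mathbb{R}^n$ such that $$\bigl(P^0+\mathbf{Q}(P^0,P^* )\bigr)\cap U=\Phi(P^0)\cap U .$$
   Context: Fix $n\ge 2$ and a positive equilibrium distribution $P^*=(p^*_i)$, $p^*_i>0$, $\sum_i p^*_i=1$. Let $\Delta^{n-1}_+=\{P=(p_i)\in\mathbb{R}^n: p_i>0,\ \sum_i p_i=1\}$. For $i\neq j$ let $\gamma^{ji}\in\mathbb{R}^n$ be the vector with $\gamma^{ji}_j=-1$, $\gamma^{ji}_i=1$ and all other coordinates $0$. ${\rm cone}$ denotes the set of all linear combinations with non-negative coefficients; ${\rm sign}$ is the three-valued sign function. Define $$\mathbf{Q}(P,P^* )={\rm cone}\Bigl\{\gamma^{ji}\,{\rm sign}\Bigl(\tfrac{p_j}{p^*_j}-\tfrac{p_i}{p^*_i}\Bigr)\ :\ 1\le j<i\le n\Bigr\}.$$ $\mathcal{K}$ is the class of all ODE systems $$\frac{dP}{dt}=\sum_{i>j} w^*_{ij}\Bigl(\frac{p_j}{p^*_j}-\frac{p_i}{p^*_i}\Bigr)\gamma^{ji}$$ with arbitrary constants $w^*_{ij}\ge 0$ (Kolmogorov equations of Markov chains with detailed balance and equilibrium $P^*$). $\Phi(P^0)$ is the set of all values $P(t)$, $t>0$, of solutions with $P(0)=P^0$ of all systems in $\mathcal{K}$. *)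

theory Defs
  imports "HOL-Analysis.Analysis"
begin

text \<open>Coordinates of R^n are indexed by a finite linearly ordered type 'n
  (playing the role of {1..n} with its usual order).\<close>

definition gam :: "('n::{finite,linorder}) \<Rightarrow> 'n \<Rightarrow> (real, 'n) vec" where
  "gam j i = (\<chi> k. if k = i then 1 else if k = j then -1 else 0)"

definition simplex_pos :: "((real, 'n::{finite,linorder}) vec) set" where
  "simplex_pos = {P. (\<forall>i. P $ i > 0) \<and> (\<Sum>i\<in>UNIV. P $ i) = 1}"

definition Qcone :: "((real, 'n::{finite,linorder}) vec) \<Rightarrow> (real, 'n) vec \<Rightarrow> ((real, 'n) vec) set" where
  "Qcone P Ps = {(\<Sum>(j,i)\<in>{(j,i). j < i}. c j i *\<^sub>R
        (sgn (P $ j / Ps $ j - P $ i / Ps $ i) *\<^sub>R gam j i)) | c.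
        \<forall>j i. j < i \<longrightarrow> c j i \<ge> 0}"

text \<open>Right-hand side of the Kolmogorov equation with weights w i j = w*_{ij}, i > j.\<close>
definition kfield :: "(('n::{finite,linorder}) \<Rightarrow> 'n \<Rightarrow> real) \<Rightarrow> (real, 'n) vec \<Rightarrow> (real, 'n) vec \<Rightarrow> (real, 'n) vec" where
  "kfield w Ps P = (\<Sum>(j,i)\<in>{(j,i). j < i}.
        (w i j * (P $ j / Ps $ j - P $ i / Ps $ i)) *\<^sub>R gam j i)"

definition Phi :: "((real, 'n::{finite,linorder}) vec) \<Rightarrow> (real, 'n) vec \<Rightarrow> ((real, 'n) vec) set" where
  "Phi Ps P0 = {x. \<exists>w P t. (\<forall>i j. j < i \<longrightarrow> w i j \<ge> 0) \<and> P 0 = P0 \<and>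
        (\<forall>s\<ge>0. (P has_vector_derivative kfield w Ps (P s)) (at s within {0..})) \<and>
        t > 0 \<and> x = P t}"

end

theory Submission imports Defs begin

definition gale :: "('n::finite \<Rightarrow> real) \<Rightarrow> ('n \<Rightarrow> real) \<Rightarrow> bool" where
  "gale x v \<longleftrightarrow> (\<Sum>k\<in>UNIV. v k) = 0 \<and>
     (\<forall>m T. T \<subseteq> {l. x l = x m} \<longrightarrow> (\<Sum>l\<in>{l. x l > x m} \<union> T. v l) \<le> 0)"

definition ind :: "'n \<Rightarrow> 'n \<Rightarrow> real" where "ind a l = (if l = a then 1 else 0)"

lemma sum_ind: "finite S \<Longrightarrow> (\<Sum>l\<in>S. ind b l) = (if b \<in> S then 1 else 0)"
  unfolding ind_def by (simp add: sum.delta')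

lemma flow_step:
  fixes x v :: "'n::finite \<Rightarrow> real"
  assumes g: "gale x v" and nz: "\<not> (\<forall>k. v k = 0)"
  obtains a b m where "x b < x a" "0 < m" "m \<le> v b" "m \<le> - v a"
     "gale x (\<lambda>l. v l - m * (ind b l - ind a l))"
     "v b = m \<or> v a = - m"
proof -
  have s0: "(\<Sum>k\<in>UNIV. v k) = 0" using g by (simp add: gale_def)
  have "\<exists>b. v b > 0"
  proof (rule ccontr)
    assume "\<not> (\<exists>b. v b > 0)"
    then have "\<forall>k. 0 \<le> - v k" by (auto simp: not_less)
    then have "(\<Sum>k\<in>UNIV. - v k) = 0 \<longleftrightarrow> (\<forall>k\<in>UNIV. - v k = 0)"
      by (intro sum_nonneg_eq_0_iff) auto
    moreover have "(\<Sum>k\<in>UNIV. - v k) = 0" using s0 by (simp add: sum_negf)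
    ultimately show False using nz by auto
  qed
  define B where "B = {k. v k > 0}"
  have Bne: "B \<noteq> {}" using \<open>\<exists>b. v b > 0\<close> by (auto simp: B_def)
  define M where "M = Max (x ` B)"
  have "M \<in> x ` B" unfolding M_def by (rule Max_in) (use Bne in auto)
  then obtain b where bB: "b \<in> B" and xb: "x b = M" by auto
  have bmax: "\<And>k. v k > 0 \<Longrightarrow> x k \<le> x b"
    using xb unfolding M_def B_def by (auto intro!: Max_ge)
  have vb: "v b > 0" using bB by (simp add: B_def)
  have gc: "\<And>m T. T \<subseteq> {l. x l = x m} \<Longrightarrow> (\<Sum>l\<in>{l. x l > x m} \<union> T. v l) \<le> 0"
    using g unfolding gale_def by blast
  have "(\<Sum>l\<in>{l. x l > x b} \<union> {b}. v l) \<le> 0" using gc[of "{b}" b] by simp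
  also have "(\<Sum>l\<in>{l. x l > x b} \<union> {b}. v l) = (\<Sum>l\<in>{l. x l > x b}. v l) + v b"
    by (subst sum.union_disjoint) auto
  finally have "(\<Sum>l\<in>{l. x l > x b}. v l) < 0" using vb by linarith
  then obtain a where xa: "x a > x b" and va: "v a < 0"
    by (metis (no_types, lifting) mem_Collect_eq not_less sum_nonneg)
  define m where "m = min (v b) (- v a)"
  have m0: "0 < m" "m \<le> v b" "m \<le> - v a" using va vb by (auto simp: m_def)
  have ab: "a \<noteq> b" using xa by auto
  define v' where "v' = (\<lambda>l. v l - m * (ind b l - ind a l))"
  have sumS: "(\<Sum>l\<in>S. v' l) = (\<Sum>l\<in>S. v l) - m * ((if b \<in> S then 1 else 0) - (if a \<in> S then 1 else 0))"
    if "finite S" for S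
    using that by (simp add: v'_def sum_subtractf sum_distrib_left[symmetric] sum_ind)
  have "gale x v'"
    unfolding gale_def
  proof (intro conjI allI impI)
    show "(\<Sum>k\<in>UNIV. v' k) = 0" using sumS[of UNIV] s0 by simp
  next
    fix m0 T assume T: "T \<subseteq> {l. x l = x m0}"
    define S where "S = {l. x l > x m0} \<union> T"
    have gS: "(\<Sum>l\<in>S. v l) \<le> 0" using gc T unfolding S_def by auto
    show "(\<Sum>l\<in>{l. x l > x m0} \<union> T. v' l) \<le> 0"
    proof (cases "a \<in> S \<and> b \<notin> S")
      case False
      then show ?thesis using sumS[of S] gS m0 unfolding S_def by (auto split: if_splits)
    next
      case True
      then have aS: "a \<in> S" and bS: "b \<notin> S" by auto
      have xbm: "x b \<le> x m0" using bS unfolding S_def by auto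
      have key: "(\<Sum>l\<in>S. v l) \<le> - m"
      proof (cases "x b < x m0")
        case True
        have "\<forall>l\<in>S. v l \<le> 0"
        proof
          fix l assume "l \<in> S"
          then have "x l \<ge> x m0" using T unfolding S_def by auto
          then show "v l \<le> 0" using bmax[of l] True by (meson less_le_trans not_le)
        qed
        then have "(\<Sum>l\<in>S-{a}. v l) \<le> 0" by (intro sum_nonpos) auto
        moreover have "(\<Sum>l\<in>S. v l) = v a + (\<Sum>l\<in>S-{a}. v l)"
          using aS by (intro sum.remove) auto
        ultimately have "(\<Sum>l\<in>S. v l) \<le> v a" by linarith
        then show ?thesis using m0 by simp
      next
        case False
        then have eq: "x m0 = x b" using xbm by auto
        have T': "T \<union> {b} \<subseteq> {l. x l = x b}" using T eq by auto
        have "(\<Sum>l\<in>{l. x l > x b} \<union> (T \<union> {b}). v l) \<le> 0"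
          using gc[OF T'] .
        also have "{l. x l > x b} \<union> (T \<union> {b}) = insert b S" unfolding S_def eq by auto
        finally have "(\<Sum>l\<in>insert b S. v l) \<le> 0" .
        then show ?thesis using bS m0 by (simp add: sum.insert_if)
      qed
      show ?thesis using sumS[of S] key aS bS unfolding S_def by simp
    qed
  qed
  then show ?thesis
    using that[of b a m] xa m0 unfolding v'_def m_def by (auto simp: min_def split: if_splits)
qed

lemma flow_exists_aux:
  fixes x :: "'n::finite \<Rightarrow> real"
  shows "\<forall>v. gale x v \<longrightarrow> card {k. v k \<noteq> 0} = N \<longrightarrow>
    (\<exists>f. (\<forall>a b. 0 \<le> f a b) \<and> (\<forall>a b. f a b \<noteq> 0 \<longrightarrow> x b < x a) \<and>
      (\<forall>l. v l = (\<Sum>p\<in>UNIV. f (fst p) (snd p) * (ind (snd p) l - ind (fst p) l))) \<and>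
      (\<Sum>p\<in>UNIV. f (fst p) (snd p)) \<le> (\<Sum>k\<in>UNIV. \<bar>v k\<bar>))"
proof (induction N rule: less_induct)
  case (less N)
  show ?case
  proof (intro allI impI)
    fix v :: "'n \<Rightarrow> real"
    assume g: "gale x v" and cN: "card {k. v k \<noteq> 0} = N"
    show "\<exists>f. (\<forall>a b. 0 \<le> f a b) \<and> (\<forall>a b. f a b \<noteq> 0 \<longrightarrow> x b < x a) \<and>
      (\<forall>l. v l = (\<Sum>p\<in>UNIV. f (fst p) (snd p) * (ind (snd p) l - ind (fst p) l))) \<and>
      (\<Sum>p\<in>UNIV. f (fst p) (snd p)) \<le> (\<Sum>k\<in>UNIV. \<bar>v k\<bar>)"
    proof (cases "\<forall>k. v k = 0")
      case True
      then show ?thesis by (intro exI[of _ "\<lambda>a b. 0"]) auto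
    next
      case False
      obtain a b m where xab: "x b < x a" and m: "0 < m" "m \<le> v b" "m \<le> - v a"
        and g': "gale x (\<lambda>l. v l - m * (ind b l - ind a l))" and zer: "v b = m \<or> v a = - m"
        using flow_step[OF g False] by blast
      have ab: "a \<noteq> b" using xab by auto
      define v' where "v' = (\<lambda>l. v l - m * (ind b l - ind a l))"
      have v'a: "v' a = v a + m" and v'b: "v' b = v b - m" and v'o: "\<And>l. l \<noteq> a \<Longrightarrow> l \<noteq> b \<Longrightarrow> v' l = v l"
        using ab by (auto simp: v'_def ind_def)
      have sub: "{k. v' k \<noteq> 0} \<subset> {k. v k \<noteq> 0}"
      proof
        show "{k. v' k \<noteq> 0} \<subseteq> {k. v k \<noteq> 0}"
        proof
          fix k assume "k \<in> {k. v' k \<noteq> 0}"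
          then show "k \<in> {k. v k \<noteq> 0}" using v'o[of k] m by (cases "k = a \<or> k = b") auto
        qed
        show "{k. v' k \<noteq> 0} \<noteq> {k. v k \<noteq> 0}"
          using zer v'a v'b m by auto
      qed
      have "card {k. v' k \<noteq> 0} < N" using psubset_card_mono[OF _ sub] cN by simp
      from less[OF this, rule_format, OF g'[folded v'_def] refl]
      obtain f where f0: "\<forall>a b. 0 \<le> f a b" and fx: "\<forall>a b. f a b \<noteq> 0 \<longrightarrow> x b < x a"
        and fr: "\<forall>l. v' l = (\<Sum>p\<in>UNIV. f (fst p) (snd p) * (ind (snd p) l - ind (fst p) l))"
        and fs: "(\<Sum>p\<in>UNIV. f (fst p) (snd p)) \<le> (\<Sum>k\<in>UNIV. \<bar>v' k\<bar>)"
        by blast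
      define f' where "f' = (\<lambda>a' b'. f a' b' + (if a' = a \<and> b' = b then m else 0))"
      have abs': "\<And>l. \<bar>v' l\<bar> = \<bar>v l\<bar> - m * (ind b l + ind a l)"
        using m ab by (auto simp: v'_def ind_def)
      have sabs: "(\<Sum>k\<in>UNIV. \<bar>v' k\<bar>) = (\<Sum>k\<in>UNIV. \<bar>v k\<bar>) - 2 * m"
        by (simp add: abs' sum_subtractf sum.distrib sum_distrib_left[symmetric] sum_ind)
      have dsum: "(\<Sum>p\<in>UNIV. (if fst p = a \<and> snd p = b then g p else 0)) = g (a, b)" for g :: "'n \<times> 'n \<Rightarrow> real"
      proof -
        have "(\<Sum>p\<in>UNIV. (if fst p = a \<and> snd p = b then g p else 0)) = (\<Sum>p\<in>UNIV. (if p = (a,b) then g p else 0))"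
          by (intro sum.cong) (auto simp: prod_eq_iff)
        then show ?thesis by simp
      qed
      show ?thesis
      proof (intro exI[of _ f'] conjI allI impI)
        fix a' b' show "0 \<le> f' a' b'" using f0 m by (auto simp: f'_def)
      next
        fix a' b' assume "f' a' b' \<noteq> 0" then show "x b' < x a'"
          using fx xab by (auto simp: f'_def split: if_splits)
      next
        fix l
        have "(\<Sum>p\<in>UNIV. f' (fst p) (snd p) * (ind (snd p) l - ind (fst p) l))
           = (\<Sum>p\<in>UNIV. f (fst p) (snd p) * (ind (snd p) l - ind (fst p) l))
             + (\<Sum>p\<in>UNIV. (if fst p = a \<and> snd p = b then m * (ind (snd p) l - ind (fst p) l) else 0))"
          by (simp add: sum.distrib[symmetric], intro sum.cong) (auto simp: f'_def algebra_simps)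
        also have "\<dots> = v' l + m * (ind b l - ind a l)" using fr dsum by simp
        finally show "v l = (\<Sum>p\<in>UNIV. f' (fst p) (snd p) * (ind (snd p) l - ind (fst p) l))"
          by (simp add: v'_def)
      next
        have "(\<Sum>p\<in>UNIV. f' (fst p) (snd p)) = (\<Sum>p\<in>UNIV. f (fst p) (snd p))
             + (\<Sum>p\<in>UNIV. (if fst p = a \<and> snd p = b then m else 0))"
          by (simp add: f'_def sum.distrib)
        also have "\<dots> = (\<Sum>p\<in>UNIV. f (fst p) (snd p)) + m" using dsum[of "\<lambda>_. m"] by simp
        finally show "(\<Sum>p\<in>UNIV. f' (fst p) (snd p)) \<le> (\<Sum>k\<in>UNIV. \<bar>v k\<bar>)"
          using fs sabs m by linarith
      qed
    qed
  qed
qed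

lemma flow_exists:
  fixes x v :: "'n::finite \<Rightarrow> real"
  assumes "gale x v"
  obtains f where "\<forall>a b. 0 \<le> f a b" "\<forall>a b. f a b \<noteq> 0 \<longrightarrow> x b < x a"
      "\<forall>l. v l = (\<Sum>p\<in>UNIV. f (fst p) (snd p) * (ind (snd p) l - ind (fst p) l))"
      "(\<Sum>p\<in>UNIV. f (fst p) (snd p)) \<le> (\<Sum>k\<in>UNIV. \<bar>v k\<bar>)"
  using flow_exists_aux[of x "card {k. v k \<noteq> 0}"] assms by blast

lemma sum_pairs_split:
  fixes g :: "'n::{finite,linorder} \<times> 'n \<Rightarrow> 'a::comm_monoid_add"
  assumes "\<And>a. g (a,a) = 0"
  shows "(\<Sum>p\<in>UNIV. g p) = (\<Sum>(j,i)\<in>{(j,i). j<i}. g (j,i) + g (i,j))"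
proof -
  let ?A = "{(j,i). j < i} :: ('n\<times>'n) set"
  have U: "UNIV = (?A \<union> prod.swap ` ?A) \<union> {p. fst p = snd p}"
  proof (rule set_eqI)
    fix p :: "'n \<times> 'n"
    obtain a b where p: "p = (a,b)" by (cases p)
    show "p \<in> UNIV \<longleftrightarrow> p \<in> (?A \<union> prod.swap ` ?A) \<union> {p. fst p = snd p}"
      unfolding p by (cases a b rule: linorder_cases) (auto simp: image_iff)
  qed
  have "(\<Sum>p\<in>UNIV. g p) = (\<Sum>p\<in>?A \<union> prod.swap ` ?A. g p) + (\<Sum>p\<in>{p. fst p = snd p}. g p)"
    by (subst U, rule sum.union_disjoint) auto
  also have "(\<Sum>p\<in>{p. fst p = snd p}. g p) = 0"
    using assms by (intro sum.neutral) auto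
  also have "(\<Sum>p\<in>?A \<union> prod.swap ` ?A. g p) = (\<Sum>p\<in>?A. g p) + (\<Sum>p\<in>prod.swap ` ?A. g p)"
    by (rule sum.union_disjoint) auto
  also have "(\<Sum>p\<in>prod.swap ` ?A. g p) = (\<Sum>p\<in>?A. g (prod.swap p))"
    by (subst sum.reindex) (auto intro: inj_onI)
  also have "(\<Sum>p\<in>?A. g p) + (\<Sum>p\<in>?A. g (prod.swap p)) = (\<Sum>p\<in>?A. g p + g (prod.swap p))"
    by (simp add: sum.distrib)
  also have "\<dots> = (\<Sum>(j,i)\<in>?A. g (j,i) + g (i,j))"
    by (intro sum.cong) auto
  finally show ?thesis by simp
qed

lemma gam_nth: "gam j i $ l = (if l = i then 1 else if l = j then -1 else 0)"
  by (simp add: gam_def)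

lemma sum_gam: "j \<noteq> i \<Longrightarrow> finite S \<Longrightarrow>
   (\<Sum>l\<in>S. gam j i $ l) = (if i \<in> S then 1 else 0) - (if j \<in> S then 1 else 0)"
proof -
  assume ji: "j \<noteq> i" and S: "finite S"
  have "(\<Sum>l\<in>S. gam j i $ l) = (\<Sum>l\<in>S. ind i l - ind j l)"
    using ji by (intro sum.cong) (auto simp: gam_nth ind_def)
  then show ?thesis using S by (simp add: sum_subtractf sum_ind)
qed

lemma flow_Qcone_eq:
  fixes P0 Ps :: "(real, 'n::{finite,linorder}) vec"
  assumes fx: "\<forall>a b. f a b \<noteq> 0 \<longrightarrow> P0$b/Ps$b < P0$a/Ps$a"
  shows "(\<chi> l. \<Sum>p\<in>UNIV. f (fst p) (snd p) * (ind (snd p) l - ind (fst p) l)) =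
    (\<Sum>(j,i)\<in>{(j,i). j<i}. (f j i + f i j) *\<^sub>R (sgn (P0$j/Ps$j - P0$i/Ps$i) *\<^sub>R gam j i))"
proof (subst vec_eq_iff, intro allI)
  fix l
  define x where "x = (\<lambda>l. P0$l/Ps$l)"
  have "(\<Sum>p\<in>UNIV. f (fst p) (snd p) * (ind (snd p) l - ind (fst p) l))
     = (\<Sum>(j,i)\<in>{(j,i). j<i}. f j i * (ind i l - ind j l) + f i j * (ind j l - ind i l))"
    by (subst sum_pairs_split) auto
  also have "\<dots> = (\<Sum>(j,i)\<in>{(j,i). j<i}. (f j i + f i j) * (sgn (x j - x i) * gam j i $ l))"
  proof (intro sum.cong refl)
    fix p assume "p \<in> {(j,i). j<(i::'n)}"
    then obtain j i where p: "p = (j,i)" and ji: "j < i" by auto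
    have g: "gam j i $ l = ind i l - ind j l" using ji by (auto simp: gam_nth ind_def)
    have "f j i * (ind i l - ind j l) + f i j * (ind j l - ind i l) = (f j i + f i j) * (sgn (x j - x i) * gam j i $ l)"
    proof (cases "x j" "x i" rule: linorder_cases)
      case less
      then have "f j i = 0" using fx unfolding x_def by (metis not_less_iff_gr_or_eq)
      then show ?thesis using less by (simp add: g algebra_simps)
    next
      case equal
      then have "f j i = 0" "f i j = 0" using fx unfolding x_def by (metis less_irrefl)+
      then show ?thesis by simp
    next
      case greater
      then have "f i j = 0" using fx unfolding x_def by (metis not_less_iff_gr_or_eq)
      then show ?thesis using greater by (simp add: g algebra_simps)
    qed
    then show "(case p of (j, i) \<Rightarrow> f j i * (ind i l - ind j l) + f i j * (ind j l - ind i l)) =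
         (case p of (j, i) \<Rightarrow> (f j i + f i j) * (sgn (x j - x i) * gam j i $ l))" by (simp add: p)
  qed
  finally show "(\<chi> l. \<Sum>p\<in>UNIV. f (fst p) (snd p) * (ind (snd p) l - ind (fst p) l)) $ l =
    (\<Sum>(j,i)\<in>{(j,i). j<i}. (f j i + f i j) *\<^sub>R (sgn (P0$j/Ps$j - P0$i/Ps$i) *\<^sub>R gam j i)) $ l"
    by (simp add: sum_component case_prod_unfold x_def mult.assoc)
qed

lemma sum_Qcone_S:
  fixes P0 Ps :: "(real, 'n::{finite,linorder}) vec"
  shows "(\<Sum>l\<in>S. (\<Sum>(j,i)\<in>{(j,i). j<i}. c j i *\<^sub>R (sgn (P0$j/Ps$j - P0$i/Ps$i) *\<^sub>R gam j i)) $ l)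
     = (\<Sum>(j,i)\<in>{(j,i). j<i}. c j i * (sgn (P0$j/Ps$j - P0$i/Ps$i) *
          ((if i \<in> S then 1 else 0) - (if j \<in> S then 1 else 0))))"
proof -
  have fin: "finite S" by simp
  have "(\<Sum>l\<in>S. (\<Sum>(j,i)\<in>{(j,i). j<i}. c j i *\<^sub>R (sgn (P0$j/Ps$j - P0$i/Ps$i) *\<^sub>R gam j i)) $ l)
     = (\<Sum>l\<in>S. \<Sum>p\<in>{(j,i). j<i}. c (fst p) (snd p) * (sgn (P0$fst p/Ps$fst p - P0$snd p/Ps$snd p) * gam (fst p) (snd p) $ l))"
    by (simp add: sum_component case_prod_unfold mult.assoc)
  also have "\<dots> = (\<Sum>p\<in>{(j,i). j<i}. \<Sum>l\<in>S. c (fst p) (snd p) * (sgn (P0$fst p/Ps$fst p - P0$snd p/Ps$snd p) * gam (fst p) (snd p) $ l))"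
    by (rule sum.swap)
  also have "\<dots> = (\<Sum>p\<in>{(j,i). j<i}. c (fst p) (snd p) * (sgn (P0$fst p/Ps$fst p - P0$snd p/Ps$snd p) *
          ((if snd p \<in> S then 1 else 0) - (if fst p \<in> S then 1 else 0))))"
  proof (intro sum.cong refl)
    fix p assume "p \<in> {(j,i). j<(i::'n)}"
    then have ne: "fst p \<noteq> snd p" by auto
    show "(\<Sum>l\<in>S. c (fst p) (snd p) * (sgn (P0$fst p/Ps$fst p - P0$snd p/Ps$snd p) * gam (fst p) (snd p) $ l)) =
      c (fst p) (snd p) * (sgn (P0$fst p/Ps$fst p - P0$snd p/Ps$snd p) *
          ((if snd p \<in> S then 1 else 0) - (if fst p \<in> S then 1 else 0)))"
      by (simp add: sum_distrib_left[symmetric] sum_gam[OF ne fin])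
  qed
  finally show ?thesis by (simp add: case_prod_unfold)
qed

lemma Qcone_gale:
  fixes P0 Ps q :: "(real, 'n::{finite,linorder}) vec"
  assumes "q \<in> Qcone P0 Ps"
  shows "gale (\<lambda>l. P0$l/Ps$l) (\<lambda>l. q$l)"
proof -
  obtain c where q: "q = (\<Sum>(j,i)\<in>{(j,i). j<i}. c j i *\<^sub>R (sgn (P0$j/Ps$j - P0$i/Ps$i) *\<^sub>R gam j i))"
    and c: "\<forall>j i. j < i \<longrightarrow> c j i \<ge> 0"
    using assms unfolding Qcone_def by blast
  define x where "x = (\<lambda>l. P0$l/Ps$l)"
  show ?thesis
    unfolding gale_def
  proof (intro conjI allI impI)
    show "(\<Sum>k\<in>UNIV. q $ k) = 0" unfolding q sum_Qcone_S by simp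
  next
    fix m T assume T: "T \<subseteq> {l. P0 $ l / Ps $ l = P0 $ m / Ps $ m}"
    let ?S = "{l. P0 $ m / Ps $ m < P0 $ l / Ps $ l} \<union> T"
    have "(\<Sum>l\<in>?S. q $ l) \<le> 0"
      unfolding q sum_Qcone_S
    proof (intro sum_nonpos)
      fix p assume "p \<in> {(j,i). j<(i::'n)}"
      then obtain j i where p: "p = (j,i)" and ji: "j < i" by auto
      have cji: "c j i \<ge> 0" using c ji by auto
      have "sgn (P0$j/Ps$j - P0$i/Ps$i) * ((if i \<in> ?S then 1 else 0) - (if j \<in> ?S then 1 else 0)) \<le> (0::real)"
      proof (cases "P0$j/Ps$j" "P0$i/Ps$i" rule: linorder_cases)
        case less
        have "i \<in> ?S" if "j \<in> ?S" using that less T by auto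
        then show ?thesis using less by (auto simp: sgn_if)
      next
        case equal then show ?thesis by simp
      next
        case greater
        have "j \<in> ?S" if "i \<in> ?S" using that greater T by auto
        then show ?thesis using greater by (auto simp: sgn_if)
      qed
      then show "(case p of (j, i) \<Rightarrow> c j i * (sgn (P0 $ j / Ps $ j - P0 $ i / Ps $ i) *
          ((if i \<in> ?S then 1 else 0) - (if j \<in> ?S then 1 else 0)))) \<le> 0"
        using cji by (simp add: p mult_nonneg_nonpos)
    qed
    then show "(\<Sum>l\<in>{l. P0 $ m / Ps $ m < P0 $ l / Ps $ l} \<union> T. q $ l) \<le> 0" .
  qed
qed

lemma gale_Qcone_bounded:
  fixes P0 Ps v :: "(real, 'n::{finite,linorder}) vec"
  assumes "gale (\<lambda>l. P0$l/Ps$l) (\<lambda>l. v$l)"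
  obtains c where "v = (\<Sum>(j,i)\<in>{(j,i). j<i}. c j i *\<^sub>R (sgn (P0$j/Ps$j - P0$i/Ps$i) *\<^sub>R gam j i))"
    "\<forall>j i. j < i \<longrightarrow> 0 \<le> c j i" "\<forall>j i. j < i \<longrightarrow> c j i \<le> (\<Sum>k\<in>UNIV. \<bar>v$k\<bar>)"
proof -
  obtain f where f0: "\<forall>a b. 0 \<le> f a b" and fx: "\<forall>a b. f a b \<noteq> 0 \<longrightarrow> P0$b/Ps$b < P0$a/Ps$a"
      and fr: "\<forall>l. v$l = (\<Sum>p\<in>UNIV. f (fst p) (snd p) * (ind (snd p) l - ind (fst p) l))"
      and fs: "(\<Sum>p\<in>UNIV. f (fst p) (snd p)) \<le> (\<Sum>k\<in>UNIV. \<bar>v$k\<bar>)"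
    using flow_exists[OF assms] by blast
  have "v = (\<chi> l. \<Sum>p\<in>UNIV. f (fst p) (snd p) * (ind (snd p) l - ind (fst p) l))"
    using fr by (simp add: vec_eq_iff)
  also have "\<dots> = (\<Sum>(j,i)\<in>{(j,i). j<i}. (f j i + f i j) *\<^sub>R (sgn (P0$j/Ps$j - P0$i/Ps$i) *\<^sub>R gam j i))"
    by (rule flow_Qcone_eq[OF fx])
  finally have rep: "v = \<dots>" .
  have bnd: "f j i + f i j \<le> (\<Sum>k\<in>UNIV. \<bar>v$k\<bar>)" if "j < i" for j i
  proof -
    have "f j i + f i j = (\<Sum>p\<in>{(j,i),(i,j)}. f (fst p) (snd p))" using that by auto
    also have "\<dots> \<le> (\<Sum>p\<in>UNIV. f (fst p) (snd p))"
      using f0 by (intro sum_mono2) auto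
    finally show ?thesis using fs by linarith
  qed
  show ?thesis
    by (rule that[OF rep]) (use f0 bnd in auto)
qed

lemma kfield_nth: "kfield w Ps P $ k =
   (\<Sum>(j,i)\<in>{(j,i). j<i}. w i j * (P$j/Ps$j - P$i/Ps$i) * gam j i $ k)"
  by (simp add: kfield_def sum_component case_prod_unfold)

lemma sum_mult_gam: "j \<noteq> i \<Longrightarrow> (\<Sum>k\<in>UNIV. a k * gam j i $ k) = a i - a (j::'n::{finite,linorder})"
proof -
  assume ji: "j \<noteq> i"
  have "(\<Sum>k\<in>UNIV. a k * gam j i $ k) = (\<Sum>k\<in>UNIV. (if k = i then a k else 0) - (if k = j then a k else 0))"
    using ji by (intro sum.cong) (auto simp: gam_nth)
  then show ?thesis by (simp add: sum_subtractf)
qed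

lemma lyap_sign:
  fixes P Ps :: "(real, 'n::{finite,linorder}) vec"
  assumes w: "\<forall>i j. j < i \<longrightarrow> w i j \<ge> 0"
    and mono: "\<And>y z. y \<le> z \<Longrightarrow> d y \<le> d z"
  shows "(\<Sum>k\<in>UNIV. d (P$k/Ps$k) * kfield w Ps P $ k) \<le> 0"
proof -
  have "(\<Sum>k\<in>UNIV. d (P$k/Ps$k) * kfield w Ps P $ k)
      = (\<Sum>k\<in>UNIV. \<Sum>p\<in>{(j,i). j<i}. d (P$k/Ps$k) * (w (snd p) (fst p) * (P$fst p/Ps$fst p - P$snd p/Ps$snd p)) * gam (fst p) (snd p) $ k)"
    by (simp add: kfield_nth sum_distrib_left case_prod_unfold mult.assoc)
  also have "\<dots> = (\<Sum>p\<in>{(j,i). j<i}. \<Sum>k\<in>UNIV. d (P$k/Ps$k) * (w (snd p) (fst p) * (P$fst p/Ps$fst p - P$snd p/Ps$snd p)) * gam (fst p) (snd p) $ k)"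
    by (rule sum.swap)
  also have "\<dots> \<le> 0"
  proof -
    have pair: "(\<Sum>k\<in>UNIV. d (P$k/Ps$k) * (w i j * (P$j/Ps$j - P$i/Ps$i)) * gam j i $ k) \<le> 0"
      if ji: "j < i" for j i
    proof -
    let ?c = "w i j * (P$j/Ps$j - P$i/Ps$i)"
    have "(\<Sum>k\<in>UNIV. d (P$k/Ps$k) * ?c * gam j i $ k) = ?c * (\<Sum>k\<in>UNIV. d (P$k/Ps$k) * gam j i $ k)"
      by (simp add: sum_distrib_left mult_ac)
    also have "\<dots> = w i j * ((P$j/Ps$j - P$i/Ps$i) * (d (P$i/Ps$i) - d (P$j/Ps$j)))"
      using ji by (simp add: sum_mult_gam)
    also have "\<dots> \<le> 0"
    proof -
      have "(P$j/Ps$j - P$i/Ps$i) * (d (P$i/Ps$i) - d (P$j/Ps$j)) \<le> 0"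
      proof (cases "P$i/Ps$i \<le> P$j/Ps$j")
        case True
        then show ?thesis using mono[OF True] by (intro mult_nonneg_nonpos) auto
      next
        case False
        then have "P$j/Ps$j \<le> P$i/Ps$i" by auto
        then show ?thesis using mono[of "P$j/Ps$j" "P$i/Ps$i"] by (intro mult_nonpos_nonneg) auto
      qed
      then show ?thesis using w ji by (simp add: mult_nonneg_nonpos)
    qed
    finally show ?thesis .
    qed
    show ?thesis by (rule sum_nonpos) (clarsimp, rule pair, simp)
  qed
  finally show ?thesis .
qed

lemma vd_component:
  assumes "(f has_vector_derivative f') F"
  shows "((\<lambda>s. f s $ k) has_real_derivative f' $ k) F"
proof -
  have "((\<lambda>s. f s $ k) has_derivative (\<lambda>x. (x *\<^sub>R f') $ k)) F"
    by (rule bounded_linear.has_derivative[OF bounded_linear_vec_nth assms[unfolded has_vector_derivative_def]])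
  moreover have "(\<lambda>x. (x *\<^sub>R f') $ k) = (*) (f' $ k)" by (auto simp: mult.commute)
  ultimately show ?thesis by (simp add: has_field_derivative_def)
qed

lemma lyap:
  fixes P :: "real \<Rightarrow> (real, 'n::{finite,linorder}) vec" and Ps :: "(real, 'n) vec"
  assumes w: "\<forall>i j. j < i \<longrightarrow> w i j \<ge> 0"
    and der: "\<forall>s\<ge>0. (P has_vector_derivative kfield w Ps (P s)) (at s within {0..})"
    and phid: "\<And>y. (phi has_real_derivative d y) (at y)"
    and mono: "\<And>y z. y \<le> z \<Longrightarrow> d y \<le> d z"
    and Ps: "\<forall>k. Ps$k > 0"
    and t: "t \<ge> 0"
  shows "(\<Sum>k\<in>UNIV. Ps$k * phi (P t $ k / Ps$k)) \<le> (\<Sum>k\<in>UNIV. Ps$k * phi (P 0 $ k / Ps$k))"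
proof -
  define g where "g = (\<lambda>s. \<Sum>k\<in>UNIV. Ps$k * phi (P s $ k / Ps$k))"
  define g' where "g' = (\<lambda>s. \<Sum>k\<in>UNIV. d (P s $ k / Ps$k) * kfield w Ps (P s) $ k)"
  have gd: "(g has_real_derivative g' s) (at s within {0..})" if "s \<ge> 0" for s
  proof -
    have "((\<lambda>s. \<Sum>k\<in>UNIV. Ps$k * phi (P s $ k / Ps$k)) has_real_derivative
        (\<Sum>k\<in>UNIV. Ps$k * (d (P s $ k / Ps$k) * (kfield w Ps (P s) $ k / Ps$k)))) (at s within {0..})"
    proof (intro DERIV_sum DERIV_cmult DERIV_chain2[OF phid])
      fix k
      show "((\<lambda>s. P s $ k / Ps $ k) has_real_derivative kfield w Ps (P s) $ k / Ps $ k) (at s within {0..})"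
        using vd_component[OF der[rule_format, OF that]] Ps[rule_format, of k] by (intro derivative_eq_intros) auto
    qed
    moreover have "(\<Sum>k\<in>UNIV. Ps$k * (d (P s $ k / Ps$k) * (kfield w Ps (P s) $ k / Ps$k))) = g' s"
      unfolding g'_def using Ps by (intro sum.cong refl) (metis less_irrefl nonzero_mult_div_cancel_left times_divide_eq_right)
    ultimately show ?thesis unfolding g_def by simp
  qed
  have g'n: "g' s \<le> 0" for s unfolding g'_def by (rule lyap_sign[OF w mono])
  show ?thesis
  proof (cases "t = 0")
    case True then show ?thesis by simp
  next
    case False
    then have t0: "0 < t" using t by auto
    have "continuous_on {0..} g" by (rule DERIV_continuous_on) (use gd in auto)
    then have c: "continuous_on {0..t} g" by (rule continuous_on_subset) auto
    have dd: "g differentiable at x" if "0 < x" "x < t" for x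
    proof -
      have "(g has_real_derivative g' x) (at x)"
        using gd[of x] that at_within_interior[of x "{0..}"] by (simp add: interior_real_atLeast)
      then show ?thesis by (auto simp: real_differentiable_def)
    qed
    obtain l z where z: "0 < z" "z < t" and lz: "(g has_real_derivative l) (at z)" and eq: "g t - g 0 = (t - 0) * l"
      using MVT[OF t0 c dd] by blast
    have "(g has_real_derivative g' z) (at z)"
      using gd[of z] z at_within_interior[of z "{0..}"] by (simp add: interior_real_atLeast)
    then have "l = g' z" using DERIV_unique[OF lz] by simp
    then have "g t - g 0 \<le> 0" using eq g'n[of z] t0 by (simp add: mult_nonneg_nonpos)
    then show ?thesis unfolding g_def by simp
  qed
qed

lemma ep1: "0 < 1 + exp (z::real)" by (smt (verit) exp_gt_zero)

lemma frac_mono1: "a \<le> b \<Longrightarrow> 0 \<le> (a::real) \<Longrightarrow> a/(1+a) \<le> b/(1+b)"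
proof -
  assume ab: "a \<le> b" and a: "0 \<le> a"
  have "a * (1 + b) \<le> b * (1 + a)" using ab by (simp add: algebra_simps)
  then show ?thesis using ab a by (simp add: divide_simps)
qed

lemma softplus_bounds:
  fixes z :: real
  shows "max 0 z \<le> ln (1 + exp z)" "ln (1 + exp z) \<le> max 0 z + ln 2"
proof -
  have "z \<le> ln (1 + exp z)"
  proof -
    have "ln (exp z) \<le> ln (1 + exp z)" by (subst ln_le_cancel_iff) (auto simp: ep1)
    then show ?thesis by simp
  qed
  moreover have "0 \<le> ln (1 + exp z)" by (rule ln_ge_zero) (smt (verit) exp_gt_zero)
  ultimately show "max 0 z \<le> ln (1 + exp z)" by simp
  show "ln (1 + exp z) \<le> max 0 z + ln 2"
  proof (cases "z \<le> 0")
    case True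
    then have "1 + exp z \<le> 2" by simp
    then have "ln (1 + exp z) \<le> ln 2" by (subst ln_le_cancel_iff) (auto simp: ep1)
    then show ?thesis using True by simp
  next
    case False
    then have "1 + exp z \<le> 2 * exp z" by simp
    then have "ln (1 + exp z) \<le> ln (2 * exp z)" by (subst ln_le_cancel_iff) (auto simp: ep1)
    also have "\<dots> = ln 2 + z" by (simp add: ln_mult)
    finally show ?thesis using False by simp
  qed
qed

lemma hinge_lyap:
  fixes P :: "real \<Rightarrow> (real, 'n::{finite,linorder}) vec" and Ps :: "(real, 'n) vec"
  assumes w: "\<forall>i j. j < i \<longrightarrow> w i j \<ge> 0"
    and der: "\<forall>s\<ge>0. (P has_vector_derivative kfield w Ps (P s)) (at s within {0..})"
    and Ps: "\<forall>k. Ps$k > 0"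
    and t: "t \<ge> 0"
  shows "(\<Sum>k\<in>UNIV. Ps$k * max 0 (P t $ k / Ps$k - c)) \<le> (\<Sum>k\<in>UNIV. Ps$k * max 0 (P 0 $ k / Ps$k - c))"
proof -
  define C where "C = ln 2 * (\<Sum>k\<in>UNIV. Ps$k)"
  have C0: "C > 0" unfolding C_def using Ps by (intro mult_pos_pos sum_pos) auto
  have main: "(\<Sum>k\<in>UNIV. Ps$k * max 0 (P t $ k / Ps$k - c)) \<le> (\<Sum>k\<in>UNIV. Ps$k * max 0 (P 0 $ k / Ps$k - c)) + e * C"
    if e: "e > 0" for e
  proof -
    define phi where "phi = (\<lambda>y. e * ln (1 + exp ((y - c) / e)))"
    define d where "d = (\<lambda>y. exp ((y - c) / e) / (1 + exp ((y - c) / e)))"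
    have phid: "(phi has_real_derivative d y) (at y)" for y
    proof -
      have "e * exp ((y - c) / e) / (e + e * exp ((y - c) / e)) = exp ((y - c) / e) / (1 + exp ((y - c) / e))"
      proof -
        have "e + e * exp ((y - c) / e) = e * (1 + exp ((y - c) / e))" by (simp add: algebra_simps)
        then show ?thesis using e ep1[of "(y - c) / e"] by simp
      qed
      then show ?thesis unfolding phi_def d_def using e ep1
        by (auto intro!: derivative_eq_intros simp: field_simps)
    qed
    have mono: "d y \<le> d z" if "y \<le> z" for y z
    proof -
      have "exp ((y - c) / e) \<le> exp ((z - c) / e)" using that e by (simp add: divide_right_mono)
      then show ?thesis unfolding d_def by (rule frac_mono1) simp
    qed
    have pb1: "max 0 (y - c) \<le> phi y" for y
    proof -
      have "max 0 (y - c) = e * max 0 ((y - c) / e)" using e by (simp add: max_def field_simps)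
      also have "\<dots> \<le> phi y" unfolding phi_def using e softplus_bounds(1) by (intro mult_left_mono) auto
      finally show ?thesis .
    qed
    have pb2: "phi y \<le> max 0 (y - c) + e * ln 2" for y
    proof -
      have "phi y \<le> e * (max 0 ((y - c) / e) + ln 2)" unfolding phi_def using e softplus_bounds(2) by (intro mult_left_mono) auto
      also have "\<dots> = max 0 (y - c) + e * ln 2" using e by (simp add: max_def field_simps)
      finally show ?thesis .
    qed
    have "(\<Sum>k\<in>UNIV. Ps$k * max 0 (P t $ k / Ps$k - c)) \<le> (\<Sum>k\<in>UNIV. Ps$k * phi (P t $ k / Ps$k))"
      using Ps pb1 by (intro sum_mono mult_left_mono) (auto intro: less_imp_le)
    also have "\<dots> \<le> (\<Sum>k\<in>UNIV. Ps$k * phi (P 0 $ k / Ps$k))"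
      by (rule lyap[OF w der phid mono Ps t])
    also have "\<dots> \<le> (\<Sum>k\<in>UNIV. Ps$k * (max 0 (P 0 $ k / Ps$k - c) + e * ln 2))"
      using Ps pb2 by (intro sum_mono mult_left_mono) (auto intro: less_imp_le)
    also have "\<dots> = (\<Sum>k\<in>UNIV. Ps$k * max 0 (P 0 $ k / Ps$k - c)) + e * C"
      by (simp add: C_def distrib_left sum.distrib sum_distrib_left sum_distrib_right mult_ac)
    finally show ?thesis .
  qed
  show ?thesis
  proof (rule field_le_epsilon)
    fix e :: real assume "0 < e"
    then show "(\<Sum>k\<in>UNIV. Ps$k * max 0 (P t $ k / Ps$k - c)) \<le> (\<Sum>k\<in>UNIV. Ps$k * max 0 (P 0 $ k / Ps$k - c)) + e"
      using main[of "e / C"] C0 by simp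
  qed
qed

lemma sum_preserved:
  fixes P :: "real \<Rightarrow> (real, 'n::{finite,linorder}) vec" and Ps :: "(real, 'n) vec"
  assumes w: "\<forall>i j. j < i \<longrightarrow> w i j \<ge> 0"
    and der: "\<forall>s\<ge>0. (P has_vector_derivative kfield w Ps (P s)) (at s within {0..})"
    and Ps: "\<forall>k. Ps$k > 0"
    and t: "t \<ge> 0"
  shows "(\<Sum>k\<in>UNIV. P t $ k) = (\<Sum>k\<in>UNIV. P 0 $ k)"
proof -
  have e: "\<And>s. (\<Sum>k\<in>UNIV. Ps$k * (P s $ k / Ps$k)) = (\<Sum>k\<in>UNIV. P s $ k)"
    using Ps by (intro sum.cong refl) (metis less_irrefl nonzero_mult_div_cancel_left times_divide_eq_right)
  have 1: "(\<Sum>k\<in>UNIV. Ps$k * (P t $ k / Ps$k)) \<le> (\<Sum>k\<in>UNIV. Ps$k * (P 0 $ k / Ps$k))"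
    by (rule lyap[where d = "\<lambda>_. 1" and phi = "\<lambda>y. y", OF w der _ _ Ps t]) (auto intro!: derivative_eq_intros)
  have 2: "(\<Sum>k\<in>UNIV. Ps$k * (- (P t $ k / Ps$k))) \<le> (\<Sum>k\<in>UNIV. Ps$k * (- (P 0 $ k / Ps$k)))"
    by (rule lyap[where d = "\<lambda>_. -1" and phi = "\<lambda>y. - y", OF w der _ _ Ps t]) (auto intro!: derivative_eq_intros)
  have n2b: "(\<Sum>k\<in>UNIV. Ps$k * (P 0 $ k / Ps$k)) \<le> (\<Sum>k\<in>UNIV. Ps$k * (P t $ k / Ps$k))"
    using 2 by (simp add: sum_negf)
  show ?thesis using 1 n2b e[of t] e[of 0] by linarith
qed

definition dmin :: "(real, 'n::finite) vec \<Rightarrow> (real, 'n) vec \<Rightarrow> real" where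
  "dmin P0 Ps = Min ((\<lambda>(j,i). \<bar>P0$j/Ps$j - P0$i/Ps$i\<bar>) ` {(j,i). P0$j/Ps$j \<noteq> P0$i/Ps$i} \<union> {1})"

lemma dmin_pos: "dmin P0 Ps > 0"
  unfolding dmin_def by (subst Min_gr_iff) auto

lemma dmin_le: "P0$j/Ps$j \<noteq> P0$i/Ps$i \<Longrightarrow> dmin P0 Ps \<le> \<bar>P0$j/Ps$j - P0$i/Ps$i\<bar>"
  unfolding dmin_def by (rule Min_le) auto

lemma partA:
  fixes P0 Ps y :: "(real, 'n::{finite,linorder}) vec"
  assumes Ps: "\<forall>k. Ps$k > 0"
    and y: "y \<in> Phi Ps P0"
    and close: "\<forall>k. \<bar>y$k/Ps$k - P0$k/Ps$k\<bar> < dmin P0 Ps / 2"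
  shows "y - P0 \<in> Qcone P0 Ps"
proof -
  obtain w P t where w: "\<forall>i j. j < i \<longrightarrow> w i j \<ge> 0" and P0: "P 0 = P0"
    and der: "\<forall>s\<ge>0. (P has_vector_derivative kfield w Ps (P s)) (at s within {0..})"
    and t: "t > 0" and yt: "y = P t"
    using y unfolding Phi_def by blast
  define x where "x = (\<lambda>l. P0$l/Ps$l)"
  define yx where "yx = (\<lambda>l. y$l/Ps$l)"
  have g: "gale x (\<lambda>l. (y - P0)$l)"
    unfolding gale_def
  proof (intro conjI allI impI)
    show "(\<Sum>k\<in>UNIV. (y - P0) $ k) = 0"
      using sum_preserved[OF w der Ps, of t] t P0 yt by (simp add: sum_subtractf)
  next
    fix m T assume T: "T \<subseteq> {l. x l = x m}"
    define c where "c = x m"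
    define D where "D = (\<lambda>k. Ps$k * max 0 (yx k - c) - Ps$k * max 0 (x k - c))"
    have "(\<Sum>k\<in>UNIV. Ps$k * max 0 (P t $ k / Ps$k - c)) \<le> (\<Sum>k\<in>UNIV. Ps$k * max 0 (P 0 $ k / Ps$k - c))"
      using hinge_lyap[OF w der Ps less_imp_le[OF t], of c] .
    then have h: "(\<Sum>k\<in>UNIV. Ps$k * max 0 (y $ k / Ps$k - c)) \<le> (\<Sum>k\<in>UNIV. Ps$k * max 0 (P0 $ k / Ps$k - c))"
      unfolding yt[symmetric] P0 .
    have D0: "(\<Sum>k\<in>UNIV. D k) \<le> 0" unfolding D_def yx_def x_def sum_subtractf using h by linarith
    have dm: "dmin P0 Ps > 0" by (rule dmin_pos)
    have cases: "(x k > c \<longrightarrow> D k = (y - P0)$k) \<and> (x k < c \<longrightarrow> D k = 0) \<and> (x k = c \<longrightarrow> D k = max 0 ((y - P0)$k))" for k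
    proof -
      have pk: "Ps$k > 0" using Ps by auto
      have cl: "\<bar>yx k - x k\<bar> < dmin P0 Ps / 2" using close unfolding yx_def x_def by auto
      have e1: "Ps$k * yx k = y$k" "Ps$k * x k = P0$k" using pk unfolding yx_def x_def by auto
      have r1: "x k > c \<Longrightarrow> D k = (y - P0)$k"
      proof -
        assume a: "x k > c"
        then have "dmin P0 Ps \<le> \<bar>x k - c\<bar>" unfolding c_def x_def by (intro dmin_le) auto
        then have "yx k > c" using a cl by linarith
        then show ?thesis using a e1 unfolding D_def by (simp add: max_def right_diff_distrib)
      qed
      have r2: "x k < c \<Longrightarrow> D k = 0"
      proof -
        assume a: "x k < c"
        then have "dmin P0 Ps \<le> \<bar>x k - c\<bar>" unfolding c_def x_def by (intro dmin_le) auto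
        then have "yx k < c" using a cl by linarith
        then show ?thesis using a unfolding D_def by (simp add: max_def)
      qed
      have r3: "x k = c \<Longrightarrow> D k = max 0 ((y - P0)$k)"
      proof -
        assume a: "x k = c"
        have "Ps$k * max 0 (yx k - x k) = max 0 (Ps$k * (yx k - x k))" using pk by (simp add: max_mult_distrib_left)
        then show ?thesis using a e1 unfolding D_def by (simp add: right_diff_distrib)
      qed
      show ?thesis using r1 r2 r3 by blast
    qed
    let ?S = "{l. x l > x m} \<union> T"
    have "(\<Sum>l\<in>?S. (y - P0)$l) \<le> (\<Sum>l\<in>?S. D l)"
    proof (intro sum_mono)
      fix l assume "l \<in> ?S"
      then have "x l > c \<or> x l = c" using T unfolding c_def by auto
      then show "(y - P0)$l \<le> D l" using cases[of l] by auto
    qed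
    also have "\<dots> \<le> (\<Sum>l\<in>UNIV. D l)"
    proof (rule sum_mono2)
      fix l assume "l \<in> UNIV - ?S"
      then have "x l < c \<or> x l = c" unfolding c_def by auto
      then show "0 \<le> D l" using cases[of l] by auto
    qed auto
    finally show "(\<Sum>l\<in>{l. x l > x m} \<union> T. (y - P0)$l) \<le> 0" using D0 by linarith
  qed
  obtain cc where rep: "y - P0 = (\<Sum>(j,i)\<in>{(j,i). j<i}. cc j i *\<^sub>R (sgn (P0$j/Ps$j - P0$i/Ps$i) *\<^sub>R gam j i))"
    and cc: "\<forall>j i. j < i \<longrightarrow> 0 \<le> cc j i"
  proof -
    have g': "gale (\<lambda>l. P0$l/Ps$l) (\<lambda>l. (y - P0)$l)" using g unfolding x_def .
    show ?thesis by (rule gale_Qcone_bounded[OF g']) (rule that)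
  qed
  show ?thesis unfolding Qcone_def mem_Collect_eq by (intro exI[of _ cc] conjI rep cc)
qed

lemma iter_bound:
  fixes F :: "(real, 'n::finite) vec \<Rightarrow> (real, 'n) vec"
  assumes K: "\<And>y. norm (F y) \<le> K * norm y" and K0: "K \<ge> 0"
  shows "norm ((F ^^ n) z) \<le> K ^ n * norm z"
proof (induction n)
  case 0 then show ?case by simp
next
  case (Suc n)
  have "norm ((F ^^ Suc n) z) \<le> K * norm ((F ^^ n) z)" using K by simp
  also have "\<dots> \<le> K * (K ^ n * norm z)" using Suc K0 by (intro mult_left_mono) auto
  finally show ?case by simp
qed

lemma exp_series_bound_summable:
  fixes a :: real
  shows "summable (\<lambda>n. c * a ^ n / fact n)"
proof -
  have "summable (\<lambda>n. c * (a ^ n /\<^sub>R fact n))" by (intro summable_mult summable_exp_generic)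
  then show ?thesis by (simp add: divide_inverse mult_ac)
qed

lemma ps_summable:
  fixes F :: "(real, 'n::finite) vec \<Rightarrow> (real, 'n) vec"
  assumes K: "\<And>y. norm (F y) \<le> K * norm y" and K0: "K \<ge> 0"
    and a: "\<And>n. \<bar>a n\<bar> \<le> \<bar>t\<bar> ^ n / fact n"
  shows "summable (\<lambda>n. a n *\<^sub>R (F ^^ n) z)"
proof (rule summable_comparison_test'[where N=0])
  show "summable (\<lambda>n. norm z * (\<bar>t\<bar> * K) ^ n / fact n)" by (rule exp_series_bound_summable)
  fix n
  have "norm (a n *\<^sub>R (F ^^ n) z) = \<bar>a n\<bar> * norm ((F ^^ n) z)" by simp
  also have "\<dots> \<le> (\<bar>t\<bar> ^ n / fact n) * (K ^ n * norm z)"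
    using a iter_bound[OF K K0] by (intro mult_mono) auto
  also have "\<dots> = norm z * (\<bar>t\<bar> * K) ^ n / fact n" by (simp add: power_mult_distrib)
  finally show "norm (a n *\<^sub>R (F ^^ n) z) \<le> norm z * (\<bar>t\<bar> * K) ^ n / fact n" .
qed

lemma vec_axis_expansion: "(y::(real,'n::finite) vec) = (\<Sum>k\<in>UNIV. (y $ k) *\<^sub>R axis k 1)"
  by (simp add: vec_eq_iff sum_component axis_def if_distrib cong: if_cong)

lemma ps_sol:
  fixes F :: "(real, 'n::finite) vec \<Rightarrow> (real, 'n) vec" and z :: "(real, 'n) vec"
  assumes F: "bounded_linear F"
    and K: "\<And>y. norm (F y) \<le> K * norm y" and K0: "K \<ge> 0"
  defines "S \<equiv> \<lambda>t. (\<Sum>n. (t ^ n / fact n) *\<^sub>R (F ^^ n) z)"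
  shows "(S has_vector_derivative F (S t)) (at t)"
proof -
  define v where "v = (\<lambda>n. (F ^^ n) z)"
  have sm: "summable (\<lambda>n. (t ^ n / fact n) *\<^sub>R v n)" for t
    unfolding v_def by (rule ps_summable[OF K K0, where t=t]) (simp add: power_abs)
  have comp: "((\<lambda>t. S t $ k) has_real_derivative F (S t) $ k) (at t)" for k t
  proof -
    define c where "c = (\<lambda>n. v n $ k / fact n)"
    have Sk: "S t $ k = (\<Sum>n. c n * t ^ n)" for t
    proof -
      have "S t $ k = (\<Sum>n. ((t ^ n / fact n) *\<^sub>R v n) $ k)"
        using bounded_linear.suminf[OF bounded_linear_vec_nth sm[of t], of k] unfolding S_def v_def by simp
      then show ?thesis by (simp add: c_def mult.commute)
    qed
    have csum: "summable (\<lambda>n. c n * y ^ n)" for y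
    proof -
      have "summable (\<lambda>n. (y ^ n / fact n) *\<^sub>R v n)" by (rule sm)
      then have "summable (\<lambda>n. ((y ^ n / fact n) *\<^sub>R v n) $ k)"
        by (rule bounded_linear.summable[OF bounded_linear_vec_nth])
      then show ?thesis by (simp add: c_def mult.commute)
    qed
    have d: "((\<lambda>t. \<Sum>n. c n * t ^ n) has_real_derivative (\<Sum>n. diffs c n * t ^ n)) (at t)"
      by (rule termdiffs_strong_converges_everywhere[OF csum])
    have "(\<Sum>n. diffs c n * t ^ n) = (\<Sum>n. ((t ^ n / fact n) *\<^sub>R F (v n)) $ k)"
    proof -
      have "diffs c n * t ^ n = ((t ^ n / fact n) *\<^sub>R F (v n)) $ k" for n
        by (simp add: diffs_def c_def v_def field_simps del: of_nat_Suc)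
      then show ?thesis by simp
    qed
    also have "\<dots> = (\<Sum>n. (t ^ n / fact n) *\<^sub>R F (v n)) $ k"
    proof -
      have "summable (\<lambda>n. (t ^ n / fact n) *\<^sub>R F (v n))"
      proof -
        have "summable (\<lambda>n. F ((t ^ n / fact n) *\<^sub>R v n))" by (rule bounded_linear.summable[OF F sm])
        then show ?thesis by (simp add: linear_simps(5)[OF F])
      qed
      then show ?thesis by (rule bounded_linear.suminf[OF bounded_linear_vec_nth, symmetric])
    qed
    also have "(\<Sum>n. (t ^ n / fact n) *\<^sub>R F (v n)) = F (S t)"
    proof -
      have "F (S t) = (\<Sum>n. F ((t ^ n / fact n) *\<^sub>R v n))"
        using bounded_linear.suminf[OF F sm[of t]] unfolding S_def v_def by simp
      then show ?thesis by (simp add: linear_simps(5)[OF F])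
    qed
    finally show ?thesis using d Sk by simp
  qed
  have eqS: "S = (\<lambda>t. \<Sum>k\<in>UNIV. (S t $ k) *\<^sub>R axis k 1)"
    by (rule ext, rule vec_axis_expansion)
  have dk: "((\<lambda>s. (S s $ k) *\<^sub>R axis k (1::real)) has_vector_derivative (F (S t) $ k) *\<^sub>R axis k 1) (at t)" for k
  proof -
    have "((\<lambda>s. (S s $ k) *\<^sub>R axis k (1::real)) has_vector_derivative (S t $ k) *\<^sub>R 0 + (F (S t) $ k) *\<^sub>R axis k (1::real)) (at t)"
      by (rule has_vector_derivative_scaleR[OF comp[of k t] has_vector_derivative_const])
    then show ?thesis by simp
  qed
  have "((\<lambda>s. \<Sum>k\<in>UNIV. (S s $ k) *\<^sub>R axis k (1::real)) has_vector_derivative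
      (\<Sum>k\<in>UNIV. (F (S t) $ k) *\<^sub>R axis k (1::real))) (at t)"
    by (intro has_vector_derivative_sum dk)
  then show ?thesis using vec_axis_expansion[of "F (S t)"] eqS by metis
qed

definition Sser :: "((real, 'n::finite) vec \<Rightarrow> (real, 'n) vec) \<Rightarrow> (real, 'n) vec \<Rightarrow> real \<Rightarrow> (real, 'n) vec" where
  "Sser F z t = (\<Sum>n. (t ^ n / fact n) *\<^sub>R (F ^^ n) z)"

definition Yser :: "((real, 'n::finite) vec \<Rightarrow> (real, 'n) vec) \<Rightarrow> (real, 'n) vec \<Rightarrow> (real, 'n) vec" where
  "Yser F z = (\<Sum>n. (1 / fact (Suc n)) *\<^sub>R (F ^^ n) z)"

lemma Sser_0: "Sser F z 0 = z"
proof -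
  have "(\<lambda>n. (0 ^ n / fact n) *\<^sub>R (F ^^ n) z) = (\<lambda>n. if n = 0 then (F ^^ n) z else 0)"
    by (auto simp: power_0_left)
  then have "(\<lambda>n. (0 ^ n / fact n) *\<^sub>R (F ^^ n) z) sums (F ^^ 0) z"
    using sums_single[of 0 "\<lambda>n. (F ^^ n) z"] by simp
  then show ?thesis unfolding Sser_def by (simp add: sums_iff)
qed

lemma Yser_summable:
  fixes F :: "(real, 'n::finite) vec \<Rightarrow> (real, 'n) vec"
  assumes K: "\<And>y. norm (F y) \<le> K * norm y" and K0: "K \<ge> 0"
  shows "summable (\<lambda>n. (1 / fact (Suc n)) *\<^sub>R (F ^^ n) z)"
proof (rule ps_summable[OF K K0, where t=1])
  fix n :: nat
  have "fact n \<le> (fact (Suc n) :: real)" by (rule fact_mono) auto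
  then show "\<bar>1 / fact (Suc n)\<bar> \<le> \<bar>1::real\<bar> ^ n / fact n"
    by (simp add: frac_le)
qed

lemma Sser_1:
  fixes F :: "(real, 'n::finite) vec \<Rightarrow> (real, 'n) vec"
  assumes F: "bounded_linear F" and K: "\<And>y. norm (F y) \<le> K * norm y" and K0: "K \<ge> 0"
  shows "Sser F z 1 = z + F (Yser F z)"
proof -
  define f where "f = (\<lambda>n. (1 ^ n / fact n) *\<^sub>R (F ^^ n) z)"
  have sf: "summable f" unfolding f_def by (rule ps_summable[OF K K0, where t=1]) simp
  have "(\<Sum>n. f (Suc n)) = suminf f - f 0" by (rule suminf_split_head[OF sf])
  moreover have "f 0 = z" by (simp add: f_def)
  moreover have "(\<Sum>n. f (Suc n)) = F (Yser F z)"
  proof -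
    have "F (Yser F z) = (\<Sum>n. F ((1 / fact (Suc n)) *\<^sub>R (F ^^ n) z))"
      unfolding Yser_def by (rule bounded_linear.suminf[OF F Yser_summable[OF K K0]])
    also have "\<dots> = (\<Sum>n. f (Suc n))"
      by (simp add: f_def linear_simps(5)[OF F] del: fact_Suc)
    finally show ?thesis by simp
  qed
  ultimately show ?thesis unfolding Sser_def f_def[symmetric] by (simp add: algebra_simps)
qed

lemma Yser_bound:
  fixes F :: "(real, 'n::finite) vec \<Rightarrow> (real, 'n) vec"
  assumes K: "\<And>y. norm (F y) \<le> K * norm y" and K0: "K \<ge> 0" and K1: "K \<le> 1/2"
  shows "norm (Yser F z - z) \<le> 2 * K * norm z"
proof -
  define g where "g = (\<lambda>n. (1 / fact (Suc n)) *\<^sub>R (F ^^ n) z)"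
  have sg: "summable g" unfolding g_def by (rule Yser_summable[OF K K0])
  have "(\<Sum>n. g (Suc n)) = suminf g - g 0" by (rule suminf_split_head[OF sg])
  then have eq: "Yser F z - z = (\<Sum>n. g (Suc n))" by (simp add: Yser_def g_def[symmetric] g_def)
  have gb: "norm (g (Suc n)) \<le> norm z * K * K ^ n" for n
  proof -
    have "norm (g (Suc n)) = (1 / fact (Suc (Suc n))) * norm ((F ^^ Suc n) z)" by (simp add: g_def del: fact_Suc)
    also have "\<dots> \<le> 1 * (K ^ Suc n * norm z)"
    proof (intro mult_mono iter_bound[OF K K0])
      have "(1::real) \<le> fact (Suc (Suc n))" by (rule fact_ge_1)
      then show "1 / fact (Suc (Suc n)) \<le> (1::real)" by (simp del: fact_Suc)
    qed auto
    finally show ?thesis by (simp add: mult_ac)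
  qed
  have sgeo: "summable (\<lambda>n. norm z * K * K ^ n)" using K0 K1 by (intro summable_mult summable_geometric) auto
  have sn: "summable (\<lambda>n. norm (g (Suc n)))"
    by (rule summable_comparison_test'[OF sgeo, where N=0]) (simp add: gb)
  have "norm (Yser F z - z) \<le> (\<Sum>n. norm (g (Suc n)))" unfolding eq by (rule summable_norm[OF sn])
  also have "\<dots> \<le> (\<Sum>n. norm z * K * K ^ n)" by (rule suminf_le[OF gb sn sgeo])
  also have "\<dots> = norm z * K * (1 / (1 - K))"
    using K0 K1 by (subst suminf_mult) (auto intro: summable_geometric simp: suminf_geometric)
  also have "\<dots> \<le> norm z * K * 2"
    using K0 K1 by (intro mult_left_mono) (auto simp: divide_simps)
  finally show ?thesis by (simp add: mult_ac)
qed

lemma bl_nth_div: "bounded_linear (\<lambda>x::(real,'n::finite) vec. x $ k / c)"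
  using bounded_linear_compose[OF bounded_linear_divide[of c] bounded_linear_vec_nth[of k]] by (simp add: o_def)

lemma kfield_bl: "bounded_linear (kfield w Ps)"
  unfolding kfield_def case_prod_unfold
  by (intro bounded_linear_intros bl_nth_div)

definition Cl :: "(real, 'n::finite) vec \<Rightarrow> real" where "Cl Ps = (\<Sum>k\<in>UNIV. 1 / Ps$k)"

lemma ell_bound:
  assumes Ps: "\<forall>k. Ps$k > 0"
  shows "\<bar>y$j/Ps$j - y$i/Ps$i\<bar> \<le> 2 * Cl Ps * norm y"
proof -
  have c: "1 / Ps$l \<le> Cl Ps" for l
    unfolding Cl_def using Ps by (intro member_le_sum) (auto intro: less_imp_le)
  have "\<bar>y$l/Ps$l\<bar> \<le> Cl Ps * norm y" for l
  proof -
    have "\<bar>y$l/Ps$l\<bar> = (1 / Ps$l) * \<bar>y$l\<bar>" using Ps[rule_format, of l] by (simp add: abs_div)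
    also have "\<dots> \<le> Cl Ps * norm y"
      using c Ps by (intro mult_mono component_le_norm_cart) (auto intro: less_imp_le simp: Cl_def intro!: sum_nonneg)
    finally show ?thesis .
  qed
  then have "\<bar>y$j/Ps$j\<bar> \<le> Cl Ps * norm y" "\<bar>y$i/Ps$i\<bar> \<le> Cl Ps * norm y" by auto
  then show ?thesis using abs_triangle_ineq4[of "y$j/Ps$j" "y$i/Ps$i"] by linarith
qed

lemma norm_gam: "norm (gam j i) \<le> 2"
proof -
  have "norm (gam j i) \<le> (\<Sum>k\<in>UNIV. \<bar>gam j i $ k\<bar>)" by (rule norm_le_l1_cart)
  also have "\<dots> = (\<Sum>k\<in>{i,j}. \<bar>gam j i $ k\<bar>)"
    by (rule sum.mono_neutral_right) (auto simp: gam_nth)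
  also have "\<dots> \<le> 2" by (cases "i = j") (auto simp: gam_nth)
  finally show ?thesis .
qed

definition KW :: "('n::{finite,linorder} \<Rightarrow> 'n \<Rightarrow> real) \<Rightarrow> (real, 'n) vec \<Rightarrow> real" where
  "KW w Ps = 4 * Cl Ps * (\<Sum>(j,i)\<in>{(j,i). j<i}. \<bar>w i j\<bar>)"

lemma Cl_pos: "\<forall>k. Ps$k > 0 \<Longrightarrow> Cl Ps > 0"
  unfolding Cl_def by (intro sum_pos) auto

lemma KW_nonneg: "\<forall>k. Ps$k > 0 \<Longrightarrow> KW w Ps \<ge> 0"
  unfolding KW_def using Cl_pos[of Ps] by (intro mult_nonneg_nonneg sum_nonneg) (auto intro: less_imp_le)

lemma kfield_bound:
  fixes Ps :: "(real, 'n::{finite,linorder}) vec"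
  assumes Ps: "\<forall>k. Ps$k > 0"
  shows "norm (kfield w Ps y) \<le> KW w Ps * norm y"
proof -
  have "norm (kfield w Ps y) \<le> (\<Sum>(j,i)\<in>{(j,i). j<i}. norm ((w i j * (y$j/Ps$j - y$i/Ps$i)) *\<^sub>R gam j i))"
    unfolding kfield_def case_prod_unfold by (rule norm_sum)
  also have "\<dots> \<le> (\<Sum>(j,i)\<in>{(j,i). j<i}. \<bar>w i j\<bar> * (4 * Cl Ps * norm y))"
  proof (rule sum_mono)
    fix p assume "p \<in> {(j,i). j<(i::'n)}"
    obtain j i where p: "p = (j,i)" by (cases p)
    have "norm ((w i j * (y$j/Ps$j - y$i/Ps$i)) *\<^sub>R gam j i) = \<bar>w i j\<bar> * (\<bar>y$j/Ps$j - y$i/Ps$i\<bar> * norm (gam j i))"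
      by (simp add: abs_mult)
    also have "\<dots> \<le> \<bar>w i j\<bar> * ((2 * Cl Ps * norm y) * 2)"
      using ell_bound[OF Ps, of y j i] norm_gam[of j i] Cl_pos[OF Ps]
      by (intro mult_left_mono mult_mono) auto
    finally show "(case p of (j, i) \<Rightarrow> norm ((w i j * (y $ j / Ps $ j - y $ i / Ps $ i)) *\<^sub>R gam j i))
         \<le> (case p of (j, i) \<Rightarrow> \<bar>w i j\<bar> * (4 * Cl Ps * norm y))" by (simp add: p)
  qed
  also have "\<dots> = (\<Sum>(j,i)\<in>{(j,i). j<i}. \<bar>w i j\<bar>) * (4 * Cl Ps * norm y)"
    by (simp add: sum_distrib_right case_prod_unfold)
  also have "\<dots> = KW w Ps * norm y"
    unfolding KW_def by (simp add: mult_ac)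
  finally show ?thesis .
qed

definition wt :: "(real, 'n::finite \<times> 'n) vec \<Rightarrow> 'n \<Rightarrow> 'n \<Rightarrow> real" where "wt W i j = W $ (i,j)"

lemma cont_nth: "continuous_on S (f :: _ \<Rightarrow> (real, 'n::finite) vec) \<Longrightarrow> continuous_on S (\<lambda>x. f x $ k)"
  by (rule continuous_on_compose2[OF linear_continuous_on[OF bounded_linear_vec_nth] _ subset_UNIV])

lemma cont_nth_div: "continuous_on S (f :: _ \<Rightarrow> (real, 'n::finite) vec) \<Longrightarrow> continuous_on S (\<lambda>x. f x $ k / (c::real))"
  by (rule continuous_on_compose2[OF linear_continuous_on[OF bl_nth_div] _ subset_UNIV])

lemma cont_kfield:
  fixes g :: "(real, 'n::{finite,linorder} \<times> 'n) vec \<Rightarrow> (real, 'n) vec"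
  assumes "continuous_on S g"
  shows "continuous_on S (\<lambda>W. kfield (wt W) Ps (g W))"
  unfolding kfield_def case_prod_unfold wt_def
  by (intro continuous_intros cont_nth cont_nth_div assms continuous_on_id)

lemma cont_iter:
  fixes Ps z :: "(real, 'n::{finite,linorder}) vec"
  shows "continuous_on S (\<lambda>W. (kfield (wt W) Ps ^^ n) z)"
proof (induction n)
  case 0 then show ?case by (simp add: continuous_on_const)
next
  case (Suc n)
  then show ?case using cont_kfield[OF Suc, of Ps] by simp
qed

lemma Yser_cont:
  fixes Ps z :: "(real, 'n::{finite,linorder}) vec"
  assumes Ps: "\<forall>k. Ps$k > 0" and Kb: "\<forall>W\<in>Sb. KW (wt W) Ps \<le> 1/2"
  shows "continuous_on Sb (\<lambda>W. Yser (kfield (wt W) Ps) z)"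
proof -
  define f where "f = (\<lambda>n W. (1 / fact (Suc n)) *\<^sub>R (kfield (wt W) Ps ^^ n) z)"
  have ul: "uniform_limit Sb (\<lambda>n W. \<Sum>i<n. f i W) (\<lambda>W. \<Sum>i. f i W) sequentially"
  proof (rule Weierstrass_m_test)
    show "summable (\<lambda>n. norm z * (1/2) ^ n)" by (intro summable_mult summable_geometric) auto
  next
    fix n W assume W: "W \<in> Sb"
    have K0: "0 \<le> KW (wt W) Ps" by (rule KW_nonneg[OF Ps])
    have "norm (f n W) = (1 / fact (Suc n)) * norm ((kfield (wt W) Ps ^^ n) z)"
      by (simp add: f_def del: fact_Suc)
    also have "\<dots> \<le> 1 * (KW (wt W) Ps ^ n * norm z)"
    proof (intro mult_mono iter_bound[OF kfield_bound[OF Ps] K0])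
      have "(1::real) \<le> fact (Suc n)" by (rule fact_ge_1)
      then show "1 / fact (Suc n) \<le> (1::real)" by (simp del: fact_Suc)
    qed auto
    also have "\<dots> \<le> norm z * (1/2) ^ n"
      using Kb W K0 by (simp add: mult.commute mult_left_mono power_mono)
    finally show "norm (f n W) \<le> norm z * (1/2) ^ n" .
  qed
  have "continuous_on Sb (\<lambda>W. \<Sum>i. f i W)"
  proof (rule uniform_limit_theorem[OF _ ul])
    show "\<forall>\<^sub>F n in sequentially. continuous_on Sb (\<lambda>W. \<Sum>i<n. f i W)"
      unfolding f_def by (intro always_eventually allI continuous_intros cont_iter)
  qed simp
  then show ?thesis unfolding f_def Yser_def .
qed

lemma partB:
  fixes P0 Ps q :: "(real, 'n::{finite,linorder}) vec"
  assumes Ps: "\<forall>k. Ps$k > 0"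
    and rep: "q = (\<Sum>(j,i)\<in>{(j,i). j<i}. cc j i *\<^sub>R (sgn (P0$j/Ps$j - P0$i/Ps$i) *\<^sub>R gam j i))"
    and cc0: "\<forall>j i. j < i \<longrightarrow> 0 \<le> cc j i"
    and ccb: "\<forall>j i. j < i \<longrightarrow> cc j i \<le> r" and r0: "0 \<le> r"
    and rK: "8 * Cl Ps * real (card {(j,i). j<(i::'n)}) * r / dmin P0 Ps \<le> 1/2"
    and rD: "8 * Cl Ps * real (card {(j,i). j<(i::'n)}) * r / dmin P0 Ps * (4 * Cl Ps * norm P0) \<le> dmin P0 Ps / 2"
  shows "P0 + q \<in> Phi Ps P0"
proof -
  define d where "d = dmin P0 Ps"
  have d0: "d > 0" unfolding d_def by (rule dmin_pos)
  define x where "x = (\<lambda>l. P0$l/Ps$l)"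
  define A where "A = {(j,i). j<(i::'n)}"
  define Kmax where "Kmax = 8 * Cl Ps * real (card A) * r / d"
  have ClP: "Cl Ps > 0" by (rule Cl_pos[OF Ps])
  define R :: "(real, 'n \<times> 'n) vec" where
    "R = (\<chi> p. if snd p < fst p \<and> x (snd p) \<noteq> x (fst p) then 2 * cc (snd p) (fst p) / \<bar>x (snd p) - x (fst p)\<bar> else 0)"
  define Sb where "Sb = cbox 0 R"
  have R0: "0 \<le> R $ p" for p
    unfolding R_def using cc0 by auto
  have Rb: "R $ p \<le> 2 * r / d" for p
  proof (cases "snd p < fst p \<and> x (snd p) \<noteq> x (fst p)")
    case True
    have dl: "d \<le> \<bar>x (snd p) - x (fst p)\<bar>" unfolding d_def x_def using True by (intro dmin_le) (auto simp: x_def)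
    have "R $ p = 2 * cc (snd p) (fst p) / \<bar>x (snd p) - x (fst p)\<bar>" unfolding R_def using True by simp
    also have "\<dots> \<le> 2 * r / d"
      using True cc0 ccb dl d0 r0 by (intro frac_le) auto
    finally show ?thesis .
  next
    case False then show ?thesis unfolding R_def using r0 d0 by auto
  qed
  have memSb: "W \<in> Sb \<longleftrightarrow> (\<forall>p. 0 \<le> W $ p \<and> W $ p \<le> R $ p)" for W
    unfolding Sb_def mem_box_cart by simp
  have KWb: "KW (wt W) Ps \<le> Kmax" if W: "W \<in> Sb" for W
  proof -
    have "(\<Sum>(j,i)\<in>A. \<bar>wt W i j\<bar>) \<le> (\<Sum>(j,i)\<in>A. 2 * r / d)"
      using W unfolding memSb wt_def case_prod_unfold
      by (intro sum_mono) (metis Rb abs_of_nonneg order_trans)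
    also have "\<dots> = real (card A) * (2 * r / d)" by (simp add: case_prod_unfold)
    finally have "(\<Sum>(j,i)\<in>A. \<bar>wt W i j\<bar>) \<le> real (card A) * (2 * r / d)" .
    then have "4 * Cl Ps * (\<Sum>(j,i)\<in>A. \<bar>wt W i j\<bar>) \<le> 4 * Cl Ps * (real (card A) * (2 * r / d))"
      using ClP by (intro mult_left_mono) auto
    also have "\<dots> = Kmax" unfolding Kmax_def by (simp add: field_simps)
    finally show ?thesis unfolding KW_def A_def .
  qed
  have Kh: "Kmax \<le> 1/2" using rK unfolding Kmax_def A_def d_def .
  define Y where "Y = (\<lambda>W. Yser (kfield (wt W) Ps) P0)"
  define h where "h = (\<lambda>j i W. Y W $ j / Ps$j - Y W $ i / Ps$i)"
  have hclose: "\<bar>h j i W - (x j - x i)\<bar> \<le> d / 2" if W: "W \<in> Sb" for j i W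
  proof -
    have K0: "0 \<le> KW (wt W) Ps" by (rule KW_nonneg[OF Ps])
    have Kw: "KW (wt W) Ps \<le> 1/2" using KWb[OF W] Kh by simp
    have "h j i W - (x j - x i) = (Y W - P0) $ j / Ps$j - (Y W - P0) $ i / Ps$i"
      unfolding h_def x_def by (simp add: diff_divide_distrib)
    then have "\<bar>h j i W - (x j - x i)\<bar> \<le> 2 * Cl Ps * norm (Y W - P0)"
      using ell_bound[OF Ps, of "Y W - P0" j i] by simp
    also have "\<dots> \<le> 2 * Cl Ps * (2 * KW (wt W) Ps * norm P0)"
      using ClP unfolding Y_def by (intro mult_left_mono Yser_bound[OF kfield_bound[OF Ps] K0 Kw]) auto
    also have "\<dots> \<le> 2 * Cl Ps * (2 * Kmax * norm P0)"
      using ClP KWb[OF W] by (intro mult_left_mono mult_right_mono) auto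
    also have "\<dots> \<le> d / 2" using rD unfolding Kmax_def A_def d_def by (simp add: mult_ac)
    finally show ?thesis .
  qed
  have hpos: "sgn (x j - x i) * h j i W \<ge> \<bar>x j - x i\<bar> / 2" if W: "W \<in> Sb" and ne: "x j \<noteq> x i" for j i W
  proof -
    have dl: "d \<le> \<bar>x j - x i\<bar>" unfolding d_def x_def using ne by (intro dmin_le) (auto simp: x_def)
    have a: "sgn (x j - x i) * (x j - x i) = \<bar>x j - x i\<bar>" by (simp add: abs_sgn mult.commute)
    have "sgn (x j - x i) * h j i W = sgn (x j - x i) * (x j - x i) + sgn (x j - x i) * (h j i W - (x j - x i))"
      by (simp add: algebra_simps)
    then have "sgn (x j - x i) * h j i W = \<bar>x j - x i\<bar> + sgn (x j - x i) * (h j i W - (x j - x i))"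
      using a by simp
    moreover have "\<bar>sgn (x j - x i) * (h j i W - (x j - x i))\<bar> \<le> d / 2"
      using hclose[OF W, of j i] ne by (simp add: abs_mult abs_sgn_eq)
    moreover have gen: "\<And>A B E :: real. A = B + E \<Longrightarrow> \<bar>E\<bar> \<le> d/2 \<Longrightarrow> d \<le> B \<Longrightarrow> B/2 \<le> A"
      by (simp add: abs_le_iff)
    ultimately show ?thesis using dl by blast
  qed
  define T where "T = (\<lambda>W. \<chi> p. if snd p < fst p \<and> x (snd p) \<noteq> x (fst p) then
      cc (snd p) (fst p) / (sgn (x (snd p) - x (fst p)) * h (snd p) (fst p) W) else 0)"
  have TSb: "T W \<in> Sb" if W: "W \<in> Sb" for W
    unfolding memSb
  proof
    fix p :: "'n \<times> 'n"
    show "0 \<le> T W $ p \<and> T W $ p \<le> R $ p"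
    proof (cases "snd p < fst p \<and> x (snd p) \<noteq> x (fst p)")
      case True
      let ?u = "\<bar>x (snd p) - x (fst p)\<bar>"
      have hp: "sgn (x (snd p) - x (fst p)) * h (snd p) (fst p) W \<ge> ?u / 2" using hpos[OF W] True by blast
      have u0: "?u > 0" using True by simp
      have c0: "0 \<le> cc (snd p) (fst p)" using cc0 True by auto
      have "T W $ p = cc (snd p) (fst p) / (sgn (x (snd p) - x (fst p)) * h (snd p) (fst p) W)"
        unfolding T_def using True by simp
      moreover have "cc (snd p) (fst p) / (sgn (x (snd p) - x (fst p)) * h (snd p) (fst p) W) \<le> cc (snd p) (fst p) / (?u / 2)"
        using hp u0 c0 by (intro divide_left_mono) auto
      moreover have "cc (snd p) (fst p) / (?u / 2) = R $ p" unfolding R_def using True by simp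
      moreover have "0 \<le> cc (snd p) (fst p) / (sgn (x (snd p) - x (fst p)) * h (snd p) (fst p) W)"
        using hp u0 c0 by (intro divide_nonneg_pos) auto
      ultimately show ?thesis by simp
    next
      case False then show ?thesis unfolding T_def R_def by simp
    qed
  qed
  have Ycont: "continuous_on Sb Y"
    unfolding Y_def using KWb Kh by (intro Yser_cont[OF Ps]) (meson order_trans)
  have Tcont: "continuous_on Sb T"
    unfolding T_def
  proof (intro continuous_on_vec_lambda)
    fix p :: "'n \<times> 'n"
    show "continuous_on Sb (\<lambda>W. if snd p < fst p \<and> x (snd p) \<noteq> x (fst p) then
      cc (snd p) (fst p) / (sgn (x (snd p) - x (fst p)) * h (snd p) (fst p) W) else 0)"
    proof (cases "snd p < fst p \<and> x (snd p) \<noteq> x (fst p)")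
      case True
      have pos: "sgn (x (snd p) - x (fst p)) * (Y W $ snd p / Ps $ snd p - Y W $ fst p / Ps $ fst p) \<noteq> 0"
        if W: "W \<in> Sb" for W
      proof -
        have "sgn (x (snd p) - x (fst p)) * h (snd p) (fst p) W > 0"
          using hpos[OF W, of "snd p" "fst p"] True by (smt (verit) zero_less_abs_iff divide_pos_pos)
        then show ?thesis unfolding h_def by (metis less_irrefl)
      qed
      have "continuous_on Sb (\<lambda>W. cc (snd p) (fst p) / (sgn (x (snd p) - x (fst p)) * h (snd p) (fst p) W))"
        unfolding h_def
        by (intro continuous_intros cont_nth_div Ycont) (use pos in auto)
      then show ?thesis using True by simp
    next
      case False
      then have eq0: "(\<lambda>W. if snd p < fst p \<and> x (snd p) \<noteq> x (fst p) then
        cc (snd p) (fst p) / (sgn (x (snd p) - x (fst p)) * h (snd p) (fst p) W) else 0) = (\<lambda>W. 0)"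
        by (intro ext) simp
      show ?thesis unfolding eq0 by (rule continuous_on_const)
    qed
  qed
  have Sbne: "Sb \<noteq> {}" using memSb[of 0] R0 by auto
  obtain W where W: "W \<in> Sb" and fixW: "T W = W"
    using brouwer[OF _ _ Sbne Tcont] TSb unfolding Sb_def by (auto intro: compact_cbox convex_box)
  define w where "w = wt W"
  define F where "F = kfield w Ps"
  have K0: "0 \<le> KW w Ps" by (rule KW_nonneg[OF Ps])
  have Fb: "\<And>y. norm (F y) \<le> KW w Ps * norm y" unfolding F_def by (rule kfield_bound[OF Ps])
  have Fl: "bounded_linear F" unfolding F_def by (rule kfield_bl)
  define P where "P = Sser F P0"
  have wpos: "\<forall>i j. j < i \<longrightarrow> w i j \<ge> 0" using W unfolding memSb w_def wt_def by auto
  have der: "\<forall>s\<ge>0. (P has_vector_derivative kfield w Ps (P s)) (at s within {0..})"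
  proof (intro allI impI)
    fix s :: real
    have "(P has_vector_derivative F (P s)) (at s)"
      unfolding P_def Sser_def[abs_def] using ps_sol[OF Fl Fb K0, of P0 s] by simp
    then show "(P has_vector_derivative kfield w Ps (P s)) (at s within {0..})"
      unfolding F_def by (rule has_vector_derivative_at_within)
  qed
  have P0': "P 0 = P0" unfolding P_def by (rule Sser_0)
  have P1: "P 1 = P0 + F (Y W)" unfolding P_def Y_def F_def w_def
    by (rule Sser_1[OF kfield_bl kfield_bound[OF Ps] KW_nonneg[OF Ps]])
  have FY: "F (Y W) = q"
    unfolding F_def kfield_def rep
  proof (intro sum.cong refl)
    fix p assume "p \<in> {(j,i). j<(i::'n)}"
    then obtain j i where p: "p = (j,i)" and ji: "j < i" by auto
    have Wij: "W $ (i,j) = (if j < i \<and> x j \<noteq> x i then cc j i / (sgn (x j - x i) * h j i W) else 0)"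
    proof -
      have "T W $ (i,j) = (if j < i \<and> x j \<noteq> x i then cc j i / (sgn (x j - x i) * h j i W) else 0)"
        unfolding T_def by (simp only: vec_lambda_beta fst_conv snd_conv)
      then show ?thesis using fixW by simp
    qed
    have "w i j * (Y W $ j / Ps $ j - Y W $ i / Ps $ i) = cc j i * sgn (P0 $ j / Ps $ j - P0 $ i / Ps $ i)"
    proof (cases "x j = x i")
      case True
      then show ?thesis using Wij unfolding w_def wt_def x_def by simp
    next
      case False
      have hp: "sgn (x j - x i) * h j i W \<ge> \<bar>x j - x i\<bar> / 2" using hpos[OF W False] .
      have "\<bar>x j - x i\<bar> > 0" using False by simp
      moreover have gen: "\<And>a b::real. 0 < a \<Longrightarrow> a/2 \<le> b \<Longrightarrow> b \<noteq> 0" by linarith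
      ultimately have nz: "sgn (x j - x i) * h j i W \<noteq> 0" using hp by blast
      then have hnz: "h j i W \<noteq> 0" by auto
      have s2: "sgn (x j - x i) * sgn (x j - x i) = 1" using False by (simp add: sgn_if)
      have "w i j * h j i W = cc j i / (sgn (x j - x i) * h j i W) * h j i W"
        using Wij ji False unfolding w_def wt_def by simp
      also have "\<dots> = cc j i * sgn (x j - x i)"
        using nz hnz s2 by (simp add: field_simps)
      finally show ?thesis unfolding h_def x_def .
    qed
    then show "(case p of (j, i) \<Rightarrow> (w i j * (Y W $ j / Ps $ j - Y W $ i / Ps $ i)) *\<^sub>R gam j i) =
      (case p of (j, i) \<Rightarrow> cc j i *\<^sub>R (sgn (P0 $ j / Ps $ j - P0 $ i / Ps $ i) *\<^sub>R gam j i))"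
      by (simp add: p)
  qed
  show ?thesis
    unfolding Phi_def mem_Collect_eq
    by (intro exI[of _ w] exI[of _ P] exI[of _ 1] conjI wpos P0' der) (auto simp: P1 FY)
qed

theorem proposition2:
  fixes Ps P0 :: "(real, 'n::{finite,linorder}) vec"
  assumes "CARD('n) \<ge> 2"
    and "Ps \<in> simplex_pos"
    and "P0 \<in> simplex_pos"
  shows "\<exists>U. open U \<and> P0 \<in> U \<and>
           ((\<lambda>q. P0 + q) ` Qcone P0 Ps) \<inter> U = Phi Ps P0 \<inter> U"
proof -
  have Ps: "\<forall>k. Ps$k > 0" using assms(2) unfolding simplex_pos_def by auto
  define d where "d = dmin P0 Ps"
  have d0: "d > 0" unfolding d_def by (rule dmin_pos)
  define C where "C = Cl Ps"
  have C0: "C > 0" unfolding C_def by (rule Cl_pos[OF Ps])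
  define NA where "NA = real (card {(j,i). j<(i::'n)})"
  have NA0: "NA \<ge> 0" unfolding NA_def by simp
  define Z where "Z = 4 * C * norm P0"
  have Z0: "Z \<ge> 0" unfolding Z_def using C0 by simp
  define M where "M = 8 * C * (NA + 1) / d"
  have M0: "M > 0" unfolding M_def using C0 NA0 d0 by simp
  define \<kappa> where "\<kappa> = min (1/2) (d / (2 * (Z + 1)))"
  have k0: "\<kappa> > 0" unfolding \<kappa>_def using d0 Z0 by simp
  define r where "r = \<kappa> / M"
  have r0: "r > 0" unfolding r_def using k0 M0 by simp
  have Kr: "8 * C * NA * r / d \<le> \<kappa>"
  proof -
    have "8 * C * NA * r / d \<le> 8 * C * (NA + 1) * r / d"
      using C0 r0 d0 NA0 by (intro divide_right_mono mult_right_mono mult_left_mono) auto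
    also have "\<dots> = M * r" unfolding M_def by simp
    also have "\<dots> = \<kappa>" unfolding r_def using M0 by simp
    finally show ?thesis .
  qed
  have Kr0: "8 * C * NA * r / d \<ge> 0" using C0 NA0 r0 d0 by simp
  have rK: "8 * Cl Ps * real (card {(j,i). j<(i::'n)}) * r / dmin P0 Ps \<le> 1/2"
    using Kr unfolding \<kappa>_def C_def NA_def d_def by simp
  have rD: "8 * Cl Ps * real (card {(j,i). j<(i::'n)}) * r / dmin P0 Ps * (4 * Cl Ps * norm P0) \<le> dmin P0 Ps / 2"
  proof -
    have "8 * C * NA * r / d * Z \<le> \<kappa> * Z" using Kr Z0 by (rule mult_right_mono)
    also have "\<dots> \<le> d / (2 * (Z + 1)) * Z" unfolding \<kappa>_def using Z0 by (intro mult_right_mono) auto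
    also have "\<dots> \<le> d / 2"
      using d0 Z0 by (simp add: divide_simps)
    finally show ?thesis unfolding C_def NA_def d_def Z_def .
  qed
  define U where "U = {y. (\<forall>k. \<bar>y$k/Ps$k - P0$k/Ps$k\<bar> < d / 2) \<and> (\<Sum>k\<in>UNIV. \<bar>y$k - P0$k\<bar>) < r}"
  have openU: "open U"
  proof -
    have "U = (\<Inter>k\<in>UNIV. {y. \<bar>y$k/Ps$k - P0$k/Ps$k\<bar> < d / 2}) \<inter> {y. (\<Sum>k\<in>UNIV. \<bar>y$k - P0$k\<bar>) < r}"
      unfolding U_def by auto
    moreover have "open (\<Inter>k\<in>UNIV. {y. \<bar>y$k/Ps$k - P0$k/Ps$k\<bar> < d / 2})"
      by (rule open_INT) (auto intro!: open_Collect_less continuous_intros cont_nth_div continuous_on_id)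
    moreover have "open {y::(real,'n) vec. (\<Sum>k\<in>UNIV. \<bar>y$k - P0$k\<bar>) < r}"
      by (intro open_Collect_less continuous_intros cont_nth continuous_on_id)
    ultimately show ?thesis by auto
  qed
  have P0U: "P0 \<in> U" unfolding U_def using d0 r0 by simp
  have "((\<lambda>q. P0 + q) ` Qcone P0 Ps) \<inter> U = Phi Ps P0 \<inter> U"
  proof
    show "((\<lambda>q. P0 + q) ` Qcone P0 Ps) \<inter> U \<subseteq> Phi Ps P0 \<inter> U"
    proof
      fix y assume "y \<in> ((\<lambda>q. P0 + q) ` Qcone P0 Ps) \<inter> U"
      then obtain q where q: "q \<in> Qcone P0 Ps" and yq: "y = P0 + q" and yU: "y \<in> U" by auto
      have g: "gale (\<lambda>l. P0$l/Ps$l) (\<lambda>l. q$l)" by (rule Qcone_gale[OF q])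
      obtain cc where rep: "q = (\<Sum>(j,i)\<in>{(j,i). j<i}. cc j i *\<^sub>R (sgn (P0$j/Ps$j - P0$i/Ps$i) *\<^sub>R gam j i))"
        and cc0: "\<forall>j i. j < i \<longrightarrow> 0 \<le> cc j i" and ccb: "\<forall>j i. j < i \<longrightarrow> cc j i \<le> (\<Sum>k\<in>UNIV. \<bar>q$k\<bar>)"
        by (rule gale_Qcone_bounded[OF g])
      have "(\<Sum>k\<in>UNIV. \<bar>q$k\<bar>) < r" using yU unfolding U_def yq by simp
      then have ccb': "\<forall>j i. j < i \<longrightarrow> cc j i \<le> r" using ccb by fastforce
      have "P0 + q \<in> Phi Ps P0"
        by (rule partB[OF Ps rep cc0 ccb' less_imp_le[OF r0] rK rD])
      then show "y \<in> Phi Ps P0 \<inter> U" using yq yU by simp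
    qed
  next
    show "Phi Ps P0 \<inter> U \<subseteq> ((\<lambda>q. P0 + q) ` Qcone P0 Ps) \<inter> U"
    proof
      fix y assume y: "y \<in> Phi Ps P0 \<inter> U"
      have cl: "\<forall>k. \<bar>y$k/Ps$k - P0$k/Ps$k\<bar> < dmin P0 Ps / 2" using y unfolding U_def d_def by auto
      have "y - P0 \<in> Qcone P0 Ps" using partA[OF Ps _ cl] y by auto
      moreover have "y = P0 + (y - P0)" by simp
      ultimately show "y \<in> ((\<lambda>q. P0 + q) ` Qcone P0 Ps) \<inter> U" using y by blast
    qed
  qed
  then show ?thesis using openU P0U by blast
qed

end
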